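(* Let $M$ be a left $\bar k[t,\sigma]$-module finitely generated both over $\bar k[\sigma]$ and over $\bar k[t]$. Let $M_\sigma$ (resp. $M_t$) be the sum of all $\bar k[\sigma]$-submodules (resp. $\bar k[t]$-submodules) $N\subset M$ with $\dim_{\bar k}N<\infty$. Then $M_\sigma=M_t$, $\dim_{\bar k}M_\sigma<\infty$, and $M/M_\sigma$ is free of finite rank both over $\bar k[\sigma]$ and over $\bar k[t]$.
   Context: $\bar k$ is the algebraic closure of $k=\mathbb F_q(T)$ and $t$ a variable. $\bar k[\sigma]$ is the noncommutative polynomial ring with $\sigma x=x^{q^{-1}}\sigma$ ($x\in\bar k$); $\bar k[t,\sigma]$ is obtained by adjoining to $\bar k[\sigma]$ a variable $t$ commuting with $\sigma$ and with $\bar k$. *)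

theory Defs
  imports "HOL-Computational_Algebra.Polynomial"
begin

text \<open>The finite field F_q inside a field K of characteristic p (q a power of p):
  the roots of X^q - X.\<close>
definition Fq_in :: "nat \<Rightarrow> 'k::field set" where
  "Fq_in q = {x. x ^ q = x}"

definition alg_closed_field :: "'k::field itself \<Rightarrow> bool" where
  "alg_closed_field _ \<longleftrightarrow> (\<forall>P :: 'k poly. degree P > 0 \<longrightarrow> (\<exists>x. poly P x = 0))"

text \<open>K is (isomorphic to) an algebraic closure of F_q(T): K has characteristic p,
  q = p^e with e >= 1, K is algebraically closed, contains an element T transcendental
  over F_q, and every element of K is algebraic over F_q(T) (equivalently, is a root of a
  nonzero polynomial with coefficients in F_q[T]).\<close>
definition is_alg_closure_FqT :: "nat \<Rightarrow> 'k::field itself \<Rightarrow> bool" where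
  "is_alg_closure_FqT q K \<longleftrightarrow>
     (\<exists>p e. prime p \<and> e > 0 \<and> q = p ^ e \<and> of_nat p = (0::'k)) \<and>
     alg_closed_field K \<and>
     (\<exists>T::'k.
        (\<forall>P :: 'k poly. (\<forall>i. coeff P i \<in> Fq_in q) \<and> poly P T = 0 \<longrightarrow> P = 0) \<and>
        (\<forall>x::'k. \<exists>P :: 'k poly poly.
            (\<forall>i j. coeff (coeff P i) j \<in> Fq_in q) \<and>
            map_poly (\<lambda>c. poly c T) P \<noteq> 0 \<and>
            poly (map_poly (\<lambda>c. poly c T) P) x = 0))"

text \<open>A left K[t,sigma]-module structure on the K-vector space (M, scale):
  sigma acts additively with sigma x = x^(1/q) sigma, i.e. sigma (x^q m) = x sigma(m)
  (Frobenius is bijective on K), t acts K-linearly and commutes with sigma.\<close>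
definition kt_sigma_module ::
  "nat \<Rightarrow> ('k::field \<Rightarrow> 'm::ab_group_add \<Rightarrow> 'm) \<Rightarrow> ('m \<Rightarrow> 'm) \<Rightarrow> ('m \<Rightarrow> 'm) \<Rightarrow> bool" where
  "kt_sigma_module q scale sig t \<longleftrightarrow>
     vector_space scale \<and>
     (\<forall>a b. sig (a + b) = sig a + sig b) \<and>
     (\<forall>x m. sig (scale (x ^ q) m) = scale x (sig m)) \<and>
     (\<forall>a b. t (a + b) = t a + t b) \<and>
     (\<forall>x m. t (scale x m) = scale x (t m)) \<and>
     (\<forall>m. sig (t m) = t (sig m))"

definition fin_gen_over :: "('k::field \<Rightarrow> 'm::ab_group_add \<Rightarrow> 'm) \<Rightarrow> ('m \<Rightarrow> 'm) \<Rightarrow> bool" where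
  "fin_gen_over scale f \<longleftrightarrow>
     (\<exists>S. finite S \<and> module.span scale {(f ^^ n) s | s n. s \<in> S} = UNIV)"

definition fin_dim_sub :: "('k::field \<Rightarrow> 'm::ab_group_add \<Rightarrow> 'm) \<Rightarrow> 'm set \<Rightarrow> bool" where
  "fin_dim_sub scale N \<longleftrightarrow> (\<exists>B. finite B \<and> module.span scale B = N)"

definition fd_part :: "('k::field \<Rightarrow> 'm::ab_group_add \<Rightarrow> 'm) \<Rightarrow> ('m \<Rightarrow> 'm) \<Rightarrow> 'm set" where
  "fd_part scale f =
     module.span scale (\<Union>{N. module.subspace scale N \<and> f ` N \<subseteq> N \<and> fin_dim_sub scale N})"

text \<open>M/N is a free K[f]-module of finite rank: there are e_0,...,e_(r-1) in M whose
  images form a K[f]-basis of M/N. Since K[f] has left K-basis (f^n)_n, this means that the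
  images of the f^n e_i (i < r, n arbitrary) form a K-basis of M/N: they span M modulo N,
  and every finite K-linear combination of them lying in N is trivial.\<close>
definition free_fin_rank_mod ::
  "('k::field \<Rightarrow> 'm::ab_group_add \<Rightarrow> 'm) \<Rightarrow> ('m \<Rightarrow> 'm) \<Rightarrow> 'm set \<Rightarrow> bool" where
  "free_fin_rank_mod scale f N \<longleftrightarrow>
     (\<exists>(r::nat) (e::nat \<Rightarrow> 'm).
        module.span scale ({(f ^^ n) (e i) | i n. i < r} \<union> N) = UNIV \<and>
        (\<forall>F (c :: nat \<times> nat \<Rightarrow> 'k).
           finite F \<and> F \<subseteq> {..<r} \<times> UNIV \<and>
           (\<Sum>(i, n)\<in>F. scale (c (i, n)) ((f ^^ n) (e i))) \<in> N
           \<longrightarrow> (\<forall>x\<in>F. c x = 0)))"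

end

theory Submission
  imports Defs
begin



lemma (in vector_space) indep_split_zero:
  assumes "independent G" "finite G" "A \<subseteq> G" "B \<subseteq> G" "A \<inter> B = {}"
    and "y \<in> span A" "y \<in> span B"
  shows "y = 0"
proof -
  have fA: "finite A" using finite_subset[OF assms(3,2)] .
  have fB: "finite B" using finite_subset[OF assms(4,2)] .
  obtain u where u: "y = (\<Sum>v\<in>A. scale (u v) v)" using assms(6) span_finite[OF fA] by auto
  obtain w where w: "y = (\<Sum>v\<in>B. scale (w v) v)" using assms(7) span_finite[OF fB] by auto
  define c where "c v = (if v \<in> A then u v else - w v)" for v
  have "(\<Sum>v\<in>A \<union> B. scale (c v) v) = (\<Sum>v\<in>A. scale (c v) v) + (\<Sum>v\<in>B. scale (c v) v)"
    using fA fB assms(5) by (rule sum.union_disjoint)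
  also have "(\<Sum>v\<in>A. scale (c v) v) = y" unfolding u c_def by (rule sum.cong) auto
  also have "(\<Sum>v\<in>B. scale (c v) v) = - y" unfolding w c_def
    using assms(5) by (auto simp: sum_negf[symmetric] intro!: sum.cong)
  finally have z: "(\<Sum>v\<in>A \<union> B. scale (c v) v) = 0" by simp
  have "\<forall>v\<in>A. c v = 0"
    using independentD[OF assms(1) _ _ z] fA fB assms(3,4) by auto
  then show ?thesis unfolding u c_def by simp
qed

lemma (in vector_space) complement_exists:
  assumes "P \<subseteq> Q" "Q \<subseteq> span Qf" "finite Qf"
  shows "\<exists>E. finite E \<and> independent E \<and> E \<subseteq> Q \<and> Q \<subseteq> span (P \<union> E) \<and>
     (\<forall>y. y \<in> span E \<longrightarrow> y \<in> span P \<longrightarrow> y = 0)"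
proof -
  obtain \<alpha> where a: "\<alpha> \<subseteq> P" "independent \<alpha>" "P \<subseteq> span \<alpha>" "card \<alpha> = dim P"
    by (rule basis_exists)
  obtain \<gamma> where g: "\<alpha> \<subseteq> \<gamma>" "\<gamma> \<subseteq> Q" "independent \<gamma>" "Q \<subseteq> span \<gamma>"
    using maximal_independent_subset_extend[OF subset_trans[OF a(1) assms(1)] a(2)] by blast
  have fg: "finite \<gamma>" using independent_span_bound[OF assms(3) g(3)] g(2) assms(2) by auto
  define E where "E = \<gamma> - \<alpha>"
  have "finite E" using fg E_def by auto
  moreover have "independent E" using g(3) independent_mono E_def by blast
  moreover have "E \<subseteq> Q" using g E_def by auto
  moreover have "Q \<subseteq> span (P \<union> E)"
  proof -
    have "\<gamma> \<subseteq> P \<union> E" using a g E_def by auto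
    then show ?thesis using g(4) span_mono by blast
  qed
  moreover have "y = 0" if "y \<in> span E" "y \<in> span P" for y
  proof -
    have "span P \<subseteq> span \<alpha>" using a(3) by (metis span_minimal subspace_span)
    then have "y \<in> span \<alpha>" using that by auto
    then show ?thesis using indep_split_zero[OF g(3) fg g(1) _ _ _ that(1)] E_def by auto
  qed
  ultimately show ?thesis by blast
qed

lemma (in vector_space) fin_basis:
  assumes "W \<subseteq> span Wf" "finite Wf"
  obtains B where "finite B" "B \<subseteq> W" "independent B" "W \<subseteq> span B" "card B = dim W"
proof -
  obtain B where B: "B \<subseteq> W" "independent B" "W \<subseteq> span B" "card B = dim W"
    by (rule basis_exists)
  have "finite B" using independent_span_bound[OF assms(2) B(2)] B(1) assms(1) by auto
  then show ?thesis using B that by blast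
qed

lemma (in vector_space) dim_mono_fin:
  assumes "V \<subseteq> span W" "W \<subseteq> span Wf" "finite Wf"
  shows "dim V \<le> dim W"
proof -
  obtain B where B: "finite B" "B \<subseteq> W" "independent B" "W \<subseteq> span B" "card B = dim W"
    using fin_basis[OF assms(2,3)] by blast
  have "V \<subseteq> span B" using assms(1) B(4) by (metis span_minimal subspace_span subset_trans)
  then show ?thesis using dim_le_card[OF _ B(1)] B(5) by simp
qed

lemma (in vector_space) dim_union_card_le:
  assumes "finite Y" "X \<subseteq> span Xf" "finite Xf"
  shows "dim (X \<union> Y) \<le> dim X + card Y"
proof -
  obtain B where B: "finite B" "B \<subseteq> X" "independent B" "X \<subseteq> span B" "card B = dim X"
    using fin_basis[OF assms(2,3)] by blast
  have "X \<union> Y \<subseteq> span (B \<union> Y)" using B(4) span_mono[of B "B \<union> Y"] span_superset[of "B \<union> Y"] by blast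
  then have "dim (X \<union> Y) \<le> card (B \<union> Y)" using dim_le_card B(1) assms(1) by blast
  also have "\<dots> \<le> card B + card Y" by (rule card_Un_le)
  finally show ?thesis using B(5) by simp
qed

lemma (in vector_space) dim_insert_fin:
  assumes "x \<notin> span S" "S \<subseteq> span Sf" "finite Sf"
  shows "dim (insert x S) = dim S + 1"
proof -
  obtain B where B: "finite B" "B \<subseteq> S" "independent B" "S \<subseteq> span B" "card B = dim S"
    using fin_basis[OF assms(2,3)] by blast
  have "span S \<subseteq> span B" using B(4) by (metis span_minimal subspace_span)
  then have xB: "x \<notin> span B" using assms(1) span_mono[OF B(2)] by blast
  have d: "dim (insert x S) = card (insert x B)"
  proof (rule dim_unique)
    show "insert x B \<subseteq> insert x S" using B(2) by auto
    show "insert x S \<subseteq> span (insert x B)"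
      using B(4) span_mono[of B "insert x B"] span_superset[of "insert x B"] by blast
    show "independent (insert x B)" using independent_insertI[OF xB B(3)] .
  qed simp
  have "x \<notin> B" using xB span_superset[of B] by blast
  then have "card (insert x B) = card B + 1" using B(1) by simp
  then show ?thesis using B(5) d by simp
qed

locale slin = vector_space scale for scale :: "'k::field \<Rightarrow> 'm::ab_group_add \<Rightarrow> 'm" +
  fixes f :: "'m \<Rightarrow> 'm"
  assumes f_add: "f (a + b) = f a + f b"
    and f_push: "\<exists>x. \<forall>v. f (scale c v) = scale x (f v)"
    and f_lift: "\<exists>y. (y = 0 \<longrightarrow> x = 0) \<and> (\<forall>v. scale x (f v) = f (scale y v))"
begin

sublocale fadd: additive f by unfold_locales (rule f_add)

lemma f_span_sub: "f ` span X \<subseteq> span (f ` X)"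
proof
  fix y assume "y \<in> f ` span X"
  then obtain x where x: "x \<in> span X" "y = f x" by auto
  have "f x \<in> span (f ` X)" using x(1)
  proof (induction rule: span_induct_alt)
    case base then show ?case by (simp add: fadd.zero span_zero)
  next
    case (step c x y)
    obtain a where a: "\<forall>v. f (scale c v) = scale a (f v)" using f_push by blast
    show ?case using step a by (simp add: f_add span_add span_scale span_base)
  qed
  then show "y \<in> span (f ` X)" using x by simp
qed

lemma span_f_sub: "span (f ` X) \<subseteq> f ` span X"
proof
  fix y assume "y \<in> span (f ` X)"
  then show "y \<in> f ` span X"
  proof (induction rule: span_induct_alt)
    case base then show ?case using fadd.zero span_zero by (metis image_eqI)
  next
    case (step c x y)
    obtain a where a: "\<forall>v. scale c (f v) = f (scale a v)" using f_lift by blast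
    obtain x0 where x0: "x0 \<in> X" "x = f x0" using step by auto
    obtain y0 where y0: "y0 \<in> span X" "y = f y0" using step by auto
    have "scale c x + y = f (scale a x0 + y0)" using a x0 y0 by (simp add: f_add)
    moreover have "scale a x0 + y0 \<in> span X" using x0 y0 by (simp add: span_add span_scale span_base)
    ultimately show ?case by blast
  qed
qed

lemma f_span: "f ` span X = span (f ` X)"
  using f_span_sub span_f_sub by blast

lemma iter_add: "(f ^^ k) (a + b) = (f ^^ k) a + (f ^^ k) b"
  by (induction k) (simp_all add: f_add)

lemma iter_push: "\<exists>x. \<forall>v. (f ^^ k) (scale c v) = scale x ((f ^^ k) v)"
proof (induction k arbitrary: c)
  case 0 then show ?case by auto
next
  case (Suc k)
  obtain x where x: "\<forall>v. (f ^^ k) (scale c v) = scale x ((f ^^ k) v)" using Suc by blast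
  obtain y where y: "\<forall>v. f (scale x v) = scale y (f v)" using f_push by blast
  show ?case using x y by auto
qed

lemma iter_lift: "\<exists>y. (y = 0 \<longrightarrow> x = 0) \<and> (\<forall>v. scale x ((f ^^ k) v) = (f ^^ k) (scale y v))"
proof (induction k arbitrary: x)
  case 0 then show ?case by auto
next
  case (Suc k)
  obtain y where y: "y = 0 \<longrightarrow> x = 0" "\<forall>v. scale x (f v) = f (scale y v)" using f_lift by blast
  obtain z where z: "z = 0 \<longrightarrow> y = 0" "\<forall>v. scale y ((f ^^ k) v) = (f ^^ k) (scale z v)"
    using Suc by blast
  show ?case using y z by (intro exI[of _ z]) auto
qed

lemma slin_iter: "slin scale (f ^^ k)"
  by unfold_locales (auto simp: iter_add iter_push iter_lift)


lemma DL:
  assumes "A \<subseteq> B" "B \<subseteq> span Bf" "finite Bf" "f ` A \<subseteq> A'" "A' \<subseteq> span Af" "finite Af"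
    "B' \<subseteq> span (A' \<union> f ` B)"
  shows "dim B' + dim A \<le> dim A' + dim B"
proof -
  obtain \<alpha> where a: "\<alpha> \<subseteq> A" "independent \<alpha>" "A \<subseteq> span \<alpha>" "card \<alpha> = dim A"
    by (rule basis_exists)
  obtain \<gamma> where g: "\<alpha> \<subseteq> \<gamma>" "\<gamma> \<subseteq> B" "independent \<gamma>" "B \<subseteq> span \<gamma>"
    using maximal_independent_subset_extend[OF subset_trans[OF a(1) assms(1)] a(2)] by blast
  have fg: "finite \<gamma>" using independent_span_bound[OF assms(3) g(3)] g(2) assms(2) by auto
  have cg: "card \<gamma> = dim B" using basis_card_eq_dim[OF g(2,4,3)] .
  define \<beta> where "\<beta> = \<gamma> - \<alpha>"
  have fa: "finite \<alpha>" using finite_subset[OF g(1) fg] .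
  have cb: "card \<beta> = card \<gamma> - card \<alpha>" using card_Diff_subset[OF fa g(1)] \<beta>_def by simp
  have ag: "card \<alpha> \<le> card \<gamma>" using card_mono[OF fg g(1)] .
  have fb: "finite \<beta>" using fg \<beta>_def by simp
  have "f ` B \<subseteq> f ` span \<gamma>" using g(4) by (rule image_mono)
  also have "\<dots> \<subseteq> span (f ` \<gamma>)" by (rule f_span_sub)
  also have "f ` \<gamma> \<subseteq> A' \<union> f ` \<beta>" using a(1) assms(4) \<beta>_def by auto
  hence "span (f ` \<gamma>) \<subseteq> span (A' \<union> f ` \<beta>)" by (rule span_mono)
  finally have fB: "f ` B \<subseteq> span (A' \<union> f ` \<beta>)" .
  have "A' \<subseteq> span (A' \<union> f ` \<beta>)" using span_superset[of "A' \<union> f ` \<beta>"] by auto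
  then have "A' \<union> f ` B \<subseteq> span (A' \<union> f ` \<beta>)" using fB by (rule Un_least)
  hence "span (A' \<union> f ` B) \<subseteq> span (A' \<union> f ` \<beta>)" by (metis span_minimal subspace_span)
  hence B'sub: "B' \<subseteq> span (A' \<union> f ` \<beta>)" using assms(7) by blast
  have "span Af \<subseteq> span (Af \<union> f ` \<beta>)" by (rule span_mono) auto
  moreover have "f ` \<beta> \<subseteq> span (Af \<union> f ` \<beta>)" using span_superset[of "Af \<union> f ` \<beta>"] by auto
  ultimately have sp: "A' \<union> f ` \<beta> \<subseteq> span (Af \<union> f ` \<beta>)" using assms(5) by (meson Un_least subset_trans)
  have "dim B' \<le> dim (A' \<union> f ` \<beta>)"
    by (rule dim_mono_fin[OF B'sub sp]) (use assms(6) fb in simp)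
  also have "\<dots> \<le> dim A' + card (f ` \<beta>)" by (rule dim_union_card_le[OF _ assms(5,6)]) (use fb in simp)
  also have "card (f ` \<beta>) \<le> card \<beta>" by (rule card_image_le[OF fb])
  finally show ?thesis using cb ag a(4) cg by linarith
qed

definition Fam :: "'m set set" where
  "Fam = {N. subspace N \<and> f ` N \<subseteq> N \<and> fin_dim_sub scale N}"

lemma T_eq: "fd_part scale f = span (\<Union>Fam)"
  by (simp add: fd_part_def Fam_def)

lemma T_subspace: "subspace (fd_part scale f)"
  by (simp add: T_eq)

lemma Fam_sub_T: "N \<in> Fam \<Longrightarrow> N \<subseteq> fd_part scale f"
  unfolding T_eq using span_superset[of "\<Union>Fam"] by blast

lemma T_stable: "f ` fd_part scale f \<subseteq> fd_part scale f"
proof -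
  have "f ` \<Union>Fam \<subseteq> \<Union>Fam" unfolding Fam_def by blast
  then have "span (f ` \<Union>Fam) \<subseteq> span (\<Union>Fam)" by (rule span_mono)
  then show ?thesis unfolding T_eq using f_span_sub by blast
qed

lemma iter_stable: "f ` N \<subseteq> N \<Longrightarrow> (f ^^ k) ` N \<subseteq> N"
  by (induction k) auto

end

locale slin_fg = slin scale f for scale :: "'k::field \<Rightarrow> 'm::ab_group_add \<Rightarrow> 'm" and f +
  fixes S :: "'m set" assumes S_fin: "finite S" and S_span: "span {(f ^^ n) s | s n. s \<in> S} = UNIV"
begin

definition G :: "nat \<Rightarrow> 'm set" where "G n = (\<lambda>(s, j). (f ^^ j) s) ` (S \<times> {..<n})"
definition V :: "nat \<Rightarrow> 'm set" where "V n = span (G n)"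

lemma G_fin: "finite (G n)" unfolding G_def using S_fin by simp
lemma V_span_fin: "V n \<subseteq> span (G n)" by (simp add: V_def)
lemma V_sub: "subspace (V n)" by (simp add: V_def)
lemma G_mono: "m \<le> n \<Longrightarrow> G m \<subseteq> G n" unfolding G_def by auto
lemma V_mono: "m \<le> n \<Longrightarrow> V m \<subseteq> V n" unfolding V_def by (intro span_mono G_mono)
lemma V_0: "V 0 = {0}" by (simp add: V_def G_def)
lemma G_in_V: "G n \<subseteq> V n" unfolding V_def by (rule span_superset)

lemma G_f: "f ` G n \<subseteq> G (Suc n)"
proof
  fix y assume "y \<in> f ` G n"
  then obtain s j where sj: "s \<in> S" "j < n" "y = f ((f ^^ j) s)" unfolding G_def by auto
  then have "y = (\<lambda>(s, j). (f ^^ j) s) (s, Suc j)" by simp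
  moreover have "(s, Suc j) \<in> S \<times> {..<Suc n}" using sj by simp
  ultimately show "y \<in> G (Suc n)" unfolding G_def by blast
qed

lemma V_f: "f ` V n \<subseteq> V (Suc n)"
proof -
  have "f ` V n \<subseteq> span (f ` G n)" unfolding V_def by (rule f_span_sub)
  also have "\<dots> \<subseteq> V (Suc n)" unfolding V_def using G_f by (rule span_mono)
  finally show ?thesis .
qed

lemma V_step: assumes "1 \<le> n" shows "V (Suc n) \<subseteq> span (V n \<union> f ` V n)"
proof -
  have "G (Suc n) \<subseteq> V n \<union> f ` V n"
  proof
    fix y assume "y \<in> G (Suc n)"
    then obtain s j where sj: "s \<in> S" "j < Suc n" "y = (f ^^ j) s" unfolding G_def by auto
    show "y \<in> V n \<union> f ` V n"
    proof (cases "j < n")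
      case True
      then have "y \<in> G n" using sj unfolding G_def by force
      then show ?thesis using G_in_V by blast
    next
      case False
      then have jn: "j = n" using sj by simp
      then obtain m where m: "n = Suc m" using assms by (cases n) auto
      have "(f ^^ m) s \<in> G n" using sj m unfolding G_def by force
      moreover have "y = f ((f ^^ m) s)" using sj jn m by simp
      ultimately show ?thesis using G_in_V by blast
    qed
  qed
  then show ?thesis unfolding V_def[of "Suc n"] by (rule span_mono)
qed

lemma V_all: "\<exists>n. v \<in> V n"
proof -
  have sub: "subspace (\<Union>n. V n)"
  proof (rule subspaceI)
    show "0 \<in> (\<Union>n. V n)" using V_0 by auto
  next
    fix x y assume "x \<in> (\<Union>n. V n)" "y \<in> (\<Union>n. V n)"
    then obtain a b where "x \<in> V a" "y \<in> V b" by auto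
    then have "x \<in> V (max a b)" "y \<in> V (max a b)" using V_mono[of a "max a b"] V_mono[of b "max a b"] by auto
    then show "x + y \<in> (\<Union>n. V n)" using V_sub subspace_add by blast
  next
    fix c x assume "x \<in> (\<Union>n. V n)"
    then show "scale c x \<in> (\<Union>n. V n)" using V_sub subspace_scale by blast
  qed
  have "{(f ^^ n) s | s n. s \<in> S} \<subseteq> (\<Union>n. V n)"
  proof
    fix y assume "y \<in> {(f ^^ n) s | s n. s \<in> S}"
    then obtain s n where "s \<in> S" "y = (f ^^ n) s" by auto
    then have "y \<in> G (Suc n)" unfolding G_def by force
    then show "y \<in> (\<Union>n. V n)" using G_in_V by blast
  qed
  then have "span {(f ^^ n) s | s n. s \<in> S} \<subseteq> (\<Union>n. V n)" using sub by (rule span_minimal)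
  then show ?thesis using S_span by auto
qed

lemma fin_in_V: "finite B \<Longrightarrow> \<exists>M. B \<subseteq> V M"
proof (induction B rule: finite_induct)
  case empty then show ?case by simp
next
  case (insert x B)
  obtain M where M: "B \<subseteq> V M" using insert by blast
  obtain m where m: "x \<in> V m" using V_all by blast
  have "insert x B \<subseteq> V (max m M)" using M m V_mono[of m "max m M"] V_mono[of M "max m M"] by auto
  then show ?case by blast
qed

definition D :: "nat \<Rightarrow> nat" where "D n = dim (V n)"

lemma D_mono: "D n \<le> D (Suc n)"
  unfolding D_def
proof (rule dim_mono_fin[of _ _ "G (Suc n)"])
  show "V n \<subseteq> span (V (Suc n))" using V_mono[of n "Suc n"] span_superset[of "V (Suc n)"] by auto
qed (rule V_span_fin, rule G_fin)

lemma D_ineq: "D (Suc (Suc n)) + D n \<le> D (Suc n) + D (Suc n)"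
  unfolding D_def
  by (rule DL[OF V_mono V_span_fin G_fin V_f V_span_fin G_fin V_step]) simp_all

definition d :: "nat \<Rightarrow> nat" where "d n = D (Suc n) - D n"

lemma d_anti: "d (Suc n) \<le> d n"
  using D_ineq[of n] D_mono[of n] D_mono[of "Suc n"] unfolding d_def by linarith

lemma d_anti': "m \<le> n \<Longrightarrow> d n \<le> d m"
proof (induction rule: dec_induct)
  case base then show ?case by simp
next
  case (step n) then show ?case using d_anti[of n] by linarith
qed

definition N0 :: nat where "N0 = (SOME N. \<forall>m. d N \<le> d m)"

lemma N0: "d N0 \<le> d m"
proof -
  have "\<exists>N. \<forall>m. d N \<le> d m" using ex_has_least_nat[of "\<lambda>_. True" 0 d] by auto
  then show ?thesis unfolding N0_def by (rule someI_ex[where P="\<lambda>N. \<forall>m. d N \<le> d m", THEN spec])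
qed

lemma d_const: "N0 \<le> n \<Longrightarrow> d n = d N0"
  using d_anti'[of N0 n] N0[of n] by simp

lemma deg1:
  assumes "N0 \<le> n" "v \<in> V (Suc n)" "v \<notin> V n" "f v \<in> V (Suc n)"
  shows False
proof -
  let ?A = "span (insert v (V n))"
  have A1: "?A \<subseteq> V (Suc n)"
    using assms(2) V_mono[of n "Suc n"] V_sub by (intro span_minimal) auto
  have "f ` ?A \<subseteq> span (f ` insert v (V n))" by (rule f_span_sub)
  also have "\<dots> \<subseteq> V (Suc n)" using assms(4) V_f[of n] V_sub by (intro span_minimal) auto
  finally have A2: "f ` ?A \<subseteq> V (Suc n)" .
  have h1: "dim (V (Suc (Suc n))) + dim ?A \<le> dim (V (Suc n)) + dim (V (Suc n))"
    by (rule DL[OF A1 V_span_fin G_fin A2 V_span_fin G_fin V_step]) simp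
  have sV: "span (V n) = V n" unfolding V_def by (rule span_span)
  have vV: "v \<notin> span (V n)" unfolding sV by (rule assms(3))
  have h2: "dim ?A = dim (V n) + 1" unfolding dim_span
    by (rule dim_insert_fin[OF vV V_span_fin G_fin])
  have h3: "D (Suc (Suc n)) + (D n + 1) \<le> D (Suc n) + D (Suc n)" using h1[unfolded h2] unfolding D_def .
  have h4a: "d (Suc n) = d N0" using assms(1) by (intro d_const) simp
  have h4: "d (Suc n) = d n" unfolding h4a using d_const[OF assms(1)] by (rule sym)
  have h5: "D n \<le> D (Suc n)" "D (Suc n) \<le> D (Suc (Suc n))" using D_mono by auto
  show False using h3 h4 h5 unfolding d_def by linarith
qed

lemma deg2:
  assumes "N0 \<le> n" "v \<notin> V n" shows "f v \<notin> V (Suc n)"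
proof
  assume fv: "f v \<in> V (Suc n)"
  obtain M where "v \<in> V M" using V_all by blast
  define m where "m = (LEAST m. v \<in> V m)"
  have vm: "v \<in> V m" unfolding m_def by (rule LeastI) fact
  have nm: "n < m"
  proof (rule ccontr)
    assume "\<not> n < m"
    then have "V m \<subseteq> V n" using V_mono by simp
    then show False using vm assms(2) by blast
  qed
  then obtain m' where m': "m = Suc m'" by (cases m) auto
  have "v \<notin> V m'" using not_less_Least[of m' "\<lambda>m. v \<in> V m"] m' unfolding m_def by simp
  moreover have "f v \<in> V (Suc m')" using fv V_mono[of "Suc n" "Suc m'"] nm m' by auto
  ultimately show False using deg1[of m' v] vm m' nm assms(1) by simp
qed

lemma deg3: "N0 \<le> n \<Longrightarrow> v \<notin> V n \<Longrightarrow> (f ^^ k) v \<notin> V (n + k)"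
proof (induction k)
  case 0 then show ?case by simp
next
  case (Suc k)
  then show ?case using deg2[of "n + k" "(f ^^ k) v"] by simp
qed

lemma fam_sub_V: assumes "N \<in> Fam" shows "N \<subseteq> V N0"
proof
  fix v assume v: "v \<in> N"
  obtain B where B: "finite B" "span B = N" using assms unfolding Fam_def fin_dim_sub_def by auto
  obtain M where M: "B \<subseteq> V M" using fin_in_V[OF B(1)] by blast
  have NM: "N \<subseteq> V M" using M V_sub B(2) span_minimal by blast
  have "(f ^^ M) v \<in> N" using iter_stable[of N M] assms v unfolding Fam_def by auto
  then have "(f ^^ M) v \<in> V (N0 + M)" using NM V_mono[of M "N0 + M"] by auto
  then show "v \<in> V N0" using deg3[of N0 v M] by auto
qed

lemma T_sub_V: "fd_part scale f \<subseteq> V N0"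
  unfolding T_eq
proof (rule span_minimal)
  show "\<Union>Fam \<subseteq> V N0" using fam_sub_V by blast
  show "subspace (V N0)" by (rule V_sub)
qed

lemma T_fd: "fin_dim_sub scale (fd_part scale f)"
proof -
  have sp: "fd_part scale f \<subseteq> span (G N0)" using subset_trans[OF T_sub_V V_span_fin] .
  obtain B where B: "finite B" "B \<subseteq> fd_part scale f" "independent B" "fd_part scale f \<subseteq> span B"
    "card B = dim (fd_part scale f)"
    by (rule fin_basis[OF sp G_fin])
  have "span B = fd_part scale f" using span_subspace[OF B(2,4) T_subspace] .
  then show ?thesis unfolding fin_dim_sub_def using B(1) by blast
qed

end




lemma (in vector_space) eq_dim_sub:
  assumes "A \<subseteq> B" "subspace A" "B \<subseteq> span Z" "finite Z" "dim B \<le> dim A"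
  shows "B \<subseteq> A"
proof -
  obtain \<alpha> where a: "finite \<alpha>" "\<alpha> \<subseteq> A" "independent \<alpha>" "A \<subseteq> span \<alpha>" "card \<alpha> = dim A"
    by (rule fin_basis[OF subset_trans[OF assms(1) assms(3)] assms(4)])
  obtain \<gamma> where g: "\<alpha> \<subseteq> \<gamma>" "\<gamma> \<subseteq> B" "independent \<gamma>" "B \<subseteq> span \<gamma>"
    using maximal_independent_subset_extend[OF subset_trans[OF a(2) assms(1)] a(3)] by blast
  have fg: "finite \<gamma>" using independent_span_bound[OF assms(4) g(3)] g(2) assms(3) by auto
  have cg: "card \<gamma> = dim B" using basis_card_eq_dim[OF g(2,4,3)] .
  have "\<alpha> = \<gamma>" using card_subset_eq[OF fg g(1)] cg a(5) assms(5) card_mono[OF fg g(1)] by simp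
  then have "B \<subseteq> span \<alpha>" using g(4) by simp
  also have "span \<alpha> \<subseteq> A" using a(2) assms(2) by (rule span_minimal)
  finally show ?thesis .
qed

lemma (in vector_space) desc_chain:
  assumes "\<And>c. Y (Suc c) \<subseteq> Y c" "\<And>c. subspace (Y c)" "\<And>c. Y c \<subseteq> span Z" "finite Z"
  shows "\<exists>c. Y (Suc c) = Y c"
proof -
  obtain c where c: "\<forall>c'. dim (Y c) \<le> dim (Y c')"
    using ex_has_least_nat[of "\<lambda>_. True" 0 "\<lambda>c. dim (Y c)"] by auto
  have "Y c \<subseteq> Y (Suc c)"
    by (rule eq_dim_sub[OF assms(1) assms(2) assms(3) assms(4)]) (use c in blast)
  then show ?thesis using assms(1)[of c] by blast
qed

context slin
begin

lemma iter_zero: "(f ^^ k) 0 = 0"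
  by (induction k) (simp_all add: fadd.zero)

end

context slin_fg
begin

abbreviation TT where "TT \<equiv> fd_part scale f"

lemma V_iter: "(f ^^ j) ` V m \<subseteq> V (m + j)"
proof (induction j)
  case 0 show ?case by simp
next
  case (Suc j)
  have "(f ^^ Suc j) ` V m = f ` ((f ^^ j) ` V m)" by (simp add: image_comp)
  also have "\<dots> \<subseteq> f ` V (m + j)" using Suc by (rule image_mono)
  also have "\<dots> \<subseteq> V (m + Suc j)" using V_f by simp
  finally show ?case .
qed

lemma V_iter': "v \<in> V m \<Longrightarrow> (f ^^ j) v \<in> V (m + j)"
  using V_iter by blast

definition Wc :: "nat \<Rightarrow> nat \<Rightarrow> 'm set" where
  "Wc c n = {v. \<exists>k. c \<le> k \<and> (f ^^ k) v \<in> V (n + k - c)}"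

lemma Wc_sub: "subspace (Wc c n)"
proof (rule subspaceI)
  have "(f ^^ c) 0 \<in> V (n + c - c)" using iter_zero subspace_0[OF V_sub] by simp
  then show "0 \<in> Wc c n" unfolding Wc_def by (intro CollectI exI[of _ c]) simp
next
  fix x y assume "x \<in> Wc c n" "y \<in> Wc c n"
  then obtain k1 k2 where k1: "c \<le> k1" "(f ^^ k1) x \<in> V (n + k1 - c)"
    and k2: "c \<le> k2" "(f ^^ k2) y \<in> V (n + k2 - c)" unfolding Wc_def by auto
  have ex: "(f ^^ (k1 + k2)) x = (f ^^ k2) ((f ^^ k1) x)" by (subst add.commute) (simp add: funpow_add)
  have ey: "(f ^^ (k1 + k2)) y = (f ^^ k1) ((f ^^ k2) y)" by (simp add: funpow_add)
  have e1: "n + k1 - c + k2 = n + (k1 + k2) - c" using k1(1) by simp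
  have e2: "n + k2 - c + k1 = n + (k1 + k2) - c" using k2(1) by simp
  have x: "(f ^^ (k1 + k2)) x \<in> V (n + (k1 + k2) - c)"
    unfolding ex e1[symmetric] by (rule V_iter'[OF k1(2)])
  have y: "(f ^^ (k1 + k2)) y \<in> V (n + (k1 + k2) - c)"
    unfolding ey e2[symmetric] by (rule V_iter'[OF k2(2)])
  have "(f ^^ (k1 + k2)) (x + y) = (f ^^ (k1 + k2)) x + (f ^^ (k1 + k2)) y" by (rule iter_add)
  then have "(f ^^ (k1 + k2)) (x + y) \<in> V (n + (k1 + k2) - c)"
    using subspace_add[OF V_sub x y] by simp
  then show "x + y \<in> Wc c n" unfolding Wc_def using k1(1) by (intro CollectI exI[of _ "k1 + k2"]) simp
next
  fix a x assume "x \<in> Wc c n"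
  then obtain k where k: "c \<le> k" "(f ^^ k) x \<in> V (n + k - c)" unfolding Wc_def by auto
  obtain b where b: "\<forall>v. (f ^^ k) (scale a v) = scale b ((f ^^ k) v)" using iter_push by blast
  have "(f ^^ k) (scale a x) \<in> V (n + k - c)" using b subspace_scale[OF V_sub k(2)] by simp
  then show "scale a x \<in> Wc c n" unfolding Wc_def using k(1) by blast
qed

lemma Wc_mono': assumes "m \<le> n" shows "Wc c m \<subseteq> Wc c n"
proof
  fix v assume "v \<in> Wc c m"
  then obtain k where k: "c \<le> k" "(f ^^ k) v \<in> V (m + k - c)" unfolding Wc_def by auto
  have "V (m + k - c) \<subseteq> V (n + k - c)" using assms by (intro V_mono) simp
  then show "v \<in> Wc c n" unfolding Wc_def using k by blast
qed

lemma Wc_f: "f ` Wc c n \<subseteq> Wc c (Suc n)"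
proof
  fix y assume "y \<in> f ` Wc c n"
  then obtain v k where v: "y = f v" "c \<le> k" "(f ^^ k) v \<in> V (n + k - c)" unfolding Wc_def by auto
  have "(f ^^ k) y = f ((f ^^ k) v)" using v(1) by (simp add: funpow_swap1)
  also have "\<dots> \<in> V (Suc (n + k - c))" using V_f v(3) by (meson image_subset_iff)
  finally show "y \<in> Wc c (Suc n)" unfolding Wc_def using v(2) by (intro CollectI exI[of _ k]) (simp add: Suc_diff_le)
qed

lemma Wc_iter: "(f ^^ j) ` Wc c n \<subseteq> Wc c (n + j)"
proof (induction j)
  case 0 show ?case by simp
next
  case (Suc j)
  have "(f ^^ Suc j) ` Wc c n = f ` ((f ^^ j) ` Wc c n)" by (simp add: image_comp)
  also have "\<dots> \<subseteq> f ` Wc c (n + j)" using Suc by (rule image_mono)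
  also have "\<dots> \<subseteq> Wc c (n + Suc j)" using Wc_f by simp
  finally show ?case .
qed

lemma Wc_back: assumes "f v \<in> Wc c (Suc n)" shows "v \<in> Wc c n"
proof -
  obtain k where k: "c \<le> k" "(f ^^ k) (f v) \<in> V (Suc n + k - c)" using assms unfolding Wc_def by auto
  have "(f ^^ Suc k) v = (f ^^ k) (f v)" by (simp add: funpow_swap1)
  then have "(f ^^ Suc k) v \<in> V (n + Suc k - c)" using k by simp
  then show ?thesis unfolding Wc_def using k(1) by (intro CollectI exI[of _ "Suc k"]) simp
qed

lemma Wc_V: "c \<le> n \<Longrightarrow> V (n - c) \<subseteq> Wc c n"
proof
  fix v assume "c \<le> n" "v \<in> V (n - c)"
  then have "(f ^^ c) v \<in> V (n + c - c)" using V_iter'[of v "n - c" c] by simp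
  then show "v \<in> Wc c n" unfolding Wc_def by blast
qed

lemma Wc_big: assumes "c + N0 \<le> n" shows "Wc c n \<subseteq> V (n - c)"
proof
  fix v assume "v \<in> Wc c n"
  then obtain k where k: "c \<le> k" "(f ^^ k) v \<in> V (n + k - c)" unfolding Wc_def by auto
  show "v \<in> V (n - c)"
  proof (rule ccontr)
    assume "v \<notin> V (n - c)"
    then have "(f ^^ k) v \<notin> V (n - c + k)" using deg3[of "n - c" v k] assms by simp
    then show False using k assms by simp
  qed
qed

lemma Wc_fin: "Wc c n \<subseteq> V (n + N0)"
proof -
  have "Wc c n \<subseteq> Wc c (n + c + N0)" by (rule Wc_mono') simp
  also have "\<dots> \<subseteq> V (n + c + N0 - c)" by (rule Wc_big) simp
  finally show ?thesis by (simp add: add.commute add.left_commute)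
qed

lemma Y_anti: "Wc (Suc c) 0 \<subseteq> Wc c 0"
proof
  fix v assume "v \<in> Wc (Suc c) 0"
  then obtain k where k: "Suc c \<le> k" "(f ^^ k) v \<in> V (k - Suc c)" unfolding Wc_def by auto
  have "k - Suc c \<le> k - c" by simp
  then have "(f ^^ k) v \<in> V (k - c)" using V_mono k(2) by blast
  then show "v \<in> Wc c 0" unfolding Wc_def using k(1) by (intro CollectI exI[of _ k]) simp
qed

lemma Y_f: "f ` Wc (Suc c) 0 \<subseteq> Wc c 0"
proof
  fix y assume "y \<in> f ` Wc (Suc c) 0"
  then obtain v k where v: "y = f v" "Suc c \<le> k" "(f ^^ k) v \<in> V (k - Suc c)" unfolding Wc_def by auto
  have "(f ^^ k) y = f ((f ^^ k) v)" using v(1) by (simp add: funpow_swap1)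
  also have "\<dots> \<in> V (Suc (k - Suc c))" using V_f v(3) by (meson image_subset_iff)
  also have "Suc (k - Suc c) = 0 + k - c" using v(2) by simp
  finally show "y \<in> Wc c 0" unfolding Wc_def using v(2) by (intro CollectI exI[of _ k]) simp
qed

lemma T_sub_Y: "TT \<subseteq> Wc c 0"
proof
  fix v assume "v \<in> TT"
  then have "(f ^^ (c + N0)) v \<in> TT" using iter_stable[OF T_stable] by blast
  then have "(f ^^ (c + N0)) v \<in> V (0 + (c + N0) - c)" using T_sub_V by auto
  then show "v \<in> Wc c 0" unfolding Wc_def by (intro CollectI exI[of _ "c + N0"]) simp
qed

definition c0 :: nat where "c0 = (SOME c. Wc (Suc c) 0 = Wc c 0)"

lemma c0: "Wc (Suc c0) 0 = Wc c0 0"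
proof -
  have sp: "Wc c 0 \<subseteq> span (G N0)" for c using Wc_fin[of c 0] V_span_fin[of N0] by simp
  have "\<exists>c. Wc (Suc c) 0 = Wc c 0"
    by (rule desc_chain[of "\<lambda>c. Wc c 0" "G N0", OF Y_anti Wc_sub sp G_fin])
  then show ?thesis unfolding c0_def by (rule someI_ex)
qed

definition W :: "nat \<Rightarrow> 'm set" where "W n = Wc c0 n"

lemma W_0: "W 0 = TT"
proof
  show "TT \<subseteq> W 0" unfolding W_def by (rule T_sub_Y)
  have sub: "subspace (W 0)" unfolding W_def by (rule Wc_sub)
  have st: "f ` W 0 \<subseteq> W 0" unfolding W_def using Y_f[of c0] c0 by simp
  have w0: "Wc c0 0 \<subseteq> V N0" using Wc_fin[of c0 0] by simp
  have sp: "W 0 \<subseteq> span (G N0)" unfolding W_def using subset_trans[OF w0 V_span_fin] .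
  obtain B where B: "finite B" "B \<subseteq> W 0" "independent B" "W 0 \<subseteq> span B" "card B = dim (W 0)"
    by (rule fin_basis[OF sp G_fin])
  have "span B = W 0" using span_subspace[OF B(2,4) sub] .
  then have "W 0 \<in> Fam" unfolding Fam_def fin_dim_sub_def using sub st B(1) by blast
  then show "W 0 \<subseteq> TT" by (rule Fam_sub_T)
qed

lemma W_sub: "subspace (W n)" unfolding W_def by (rule Wc_sub)
lemma W_mono: "m \<le> n \<Longrightarrow> W m \<subseteq> W n" unfolding W_def by (rule Wc_mono')
lemma W_f: "f ` W n \<subseteq> W (Suc n)" unfolding W_def by (rule Wc_f)
lemma W_iter: "(f ^^ j) ` W n \<subseteq> W (n + j)" unfolding W_def by (rule Wc_iter)
lemma W_back: "f v \<in> W (Suc n) \<Longrightarrow> v \<in> W n" unfolding W_def by (rule Wc_back)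
lemma W_fin: "W n \<subseteq> span (G (n + N0))" unfolding W_def using Wc_fin V_span_fin by blast

definition L :: nat where "L = c0 + N0 + 1"

lemma W_step: assumes "L \<le> n" shows "W (Suc n) \<subseteq> span (W n \<union> f ` W n)"
proof -
  have "W (Suc n) \<subseteq> V (Suc n - c0)" unfolding W_def by (rule Wc_big) (use assms L_def in simp)
  also have "\<dots> = V (Suc (n - c0))" using assms L_def by (simp add: Suc_diff_le)
  also have "\<dots> \<subseteq> span (V (n - c0) \<union> f ` V (n - c0))" by (rule V_step) (use assms L_def in simp)
  also have "\<dots> \<subseteq> span (W n \<union> f ` W n)"
  proof (rule span_mono)
    have "V (n - c0) \<subseteq> W n" unfolding W_def by (rule Wc_V) (use assms L_def in simp)
    then show "V (n - c0) \<union> f ` V (n - c0) \<subseteq> W n \<union> f ` W n" by blast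
  qed
  finally show ?thesis .
qed

lemma W_all: "\<exists>n. v \<in> W n"
proof -
  obtain m where "v \<in> V m" using V_all by blast
  moreover have "V (m + c0 - c0) \<subseteq> W (m + c0)" unfolding W_def by (rule Wc_V) simp
  ultimately show ?thesis by auto
qed

definition Eprop :: "nat \<Rightarrow> 'm set \<Rightarrow> bool" where
  "Eprop n E \<longleftrightarrow> finite E \<and> independent E \<and> E \<subseteq> W (Suc n) \<and> W (Suc n) \<subseteq> span ((W n \<union> f ` W n) \<union> E) \<and>
     (\<forall>y. y \<in> span E \<longrightarrow> y \<in> span (W n \<union> f ` W n) \<longrightarrow> y = 0)"

definition E :: "nat \<Rightarrow> 'm set" where "E n = (SOME E. Eprop n E)"

lemma E: "Eprop n (E n)"
proof -
  have "\<exists>E. Eprop n E" unfolding Eprop_def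
  proof (rule complement_exists[of _ _ "G (Suc n + N0)"])
    show "W n \<union> f ` W n \<subseteq> W (Suc n)" using W_mono[of n "Suc n"] W_f by auto
    show "W (Suc n) \<subseteq> span (G (Suc n + N0))" by (rule W_fin)
    show "finite (G (Suc n + N0))" by (rule G_fin)
  qed
  then show ?thesis unfolding E_def by (rule someI_ex)
qed

lemma E_fin: "finite (E n)" and E_ind: "independent (E n)" and E_W: "E n \<subseteq> W (Suc n)"
  and E_span: "W (Suc n) \<subseteq> span ((W n \<union> f ` W n) \<union> E n)"
  and E_compl: "y \<in> span (E n) \<Longrightarrow> y \<in> span (W n \<union> f ` W n) \<Longrightarrow> y = 0"
  using E[of n, unfolded Eprop_def] by blast+

lemma E_empty: assumes "L \<le> n" shows "E n = {}"
proof (rule ccontr)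
  assume "E n \<noteq> {}"
  then obtain x where x: "x \<in> E n" by blast
  have "x \<in> span (W n \<union> f ` W n)" using x E_W W_step[OF assms] by blast
  then have "x = 0" using E_compl span_base[OF x] by blast
  then show False using x E_ind dependent_zero by blast
qed

lemma E_disj: assumes "m < n" shows "E m \<inter> E n = {}"
proof (rule ccontr)
  assume "E m \<inter> E n \<noteq> {}"
  then obtain x where x: "x \<in> E m" "x \<in> E n" by blast
  have "W (Suc m) \<subseteq> W n" using assms by (intro W_mono) simp
  then have "x \<in> W n" using x(1) E_W[of m] by blast
  then have "x \<in> span (W n \<union> f ` W n)" using span_superset[of "W n \<union> f ` W n"] by auto
  then have "x = 0" using E_compl span_base[OF x(2)] by blast
  then show False using x E_ind dependent_zero by blast
qed

end




context slin
begin

definition g :: "'k \<Rightarrow> 'k" where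
  "g x = (SOME y. (y = 0 \<longrightarrow> x = 0) \<and> (\<forall>v. scale x (f v) = f (scale y v)))"

lemma g_prop: "(g x = 0 \<longrightarrow> x = 0) \<and> (\<forall>v. scale x (f v) = f (scale (g x) v))"
  unfolding g_def by (rule someI_ex[OF f_lift])

lemma g0: "g x = 0 \<Longrightarrow> x = 0" using g_prop by blast
lemma gf: "scale x (f v) = f (scale (g x) v)" using g_prop by blast

end

context slin_fg
begin

definition UU :: "'m set" where "UU = (\<Union>n\<in>{..<L}. E n)"
definition rr :: nat where "rr = card UU"
definition ee :: "nat \<Rightarrow> 'm" where "ee = (SOME h. bij_betw h {..<rr} UU)"
definition lev :: "'m \<Rightarrow> nat" where "lev v = (LEAST n. v \<in> E n)"
definition deg :: "nat \<times> nat \<Rightarrow> nat" where "deg p = lev (ee (fst p)) + snd p"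

lemma UU_fin: "finite UU" unfolding UU_def using E_fin by simp

lemma ee_bij: "bij_betw ee {..<rr} UU"
proof -
  have "\<exists>h. bij_betw h {0..<card UU} UU" by (rule ex_bij_betw_nat_finite[OF UU_fin])
  then have "\<exists>h. bij_betw h {..<rr} UU" unfolding rr_def by (simp add: atLeast0LessThan)
  then show ?thesis unfolding ee_def by (rule someI_ex)
qed

lemma ee_inj: "inj_on ee {..<rr}" using ee_bij by (rule bij_betw_imp_inj_on)
lemma ee_img: "ee ` {..<rr} = UU" using ee_bij by (rule bij_betw_imp_surj_on)

lemma E_uniq: assumes "x \<in> E m" "x \<in> E n" shows "m = n"
proof (rule ccontr)
  assume "m \<noteq> n"
  then have "m < n \<or> n < m" by arith
  then show False using E_disj assms by blast
qed

lemma ee_E: assumes "i < rr" shows "ee i \<in> E (lev (ee i))" "lev (ee i) < L"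
proof -
  have "ee i \<in> UU" using ee_img assms by blast
  then obtain n where n: "n < L" "ee i \<in> E n" unfolding UU_def by blast
  have "ee i \<in> E (lev (ee i))" unfolding lev_def by (rule LeastI[of _ n]) (rule n(2))
  moreover have "lev (ee i) = n" using E_uniq[OF calculation n(2)] .
  ultimately show "ee i \<in> E (lev (ee i))" "lev (ee i) < L" using n by auto
qed

lemma lev_eq: "i < rr \<Longrightarrow> ee i \<in> E m \<Longrightarrow> lev (ee i) = m"
  using E_uniq ee_E(1) by blast

lemma term_W: assumes "i < rr" shows "(f ^^ j) (ee i) \<in> W (Suc (lev (ee i)) + j)"
proof -
  have "ee i \<in> W (Suc (lev (ee i)))" using ee_E(1)[OF assms] E_W by blast
  then show ?thesis using W_iter by blast
qed

lemma Top_step: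
  assumes IH: "\<And>K' F a. K = Suc K' \<Longrightarrow> finite F \<Longrightarrow> F \<subseteq> {..<rr} \<times> UNIV \<Longrightarrow> (\<forall>p\<in>F. deg p = K') \<Longrightarrow>
      (\<Sum>p\<in>F. scale (a p) ((f ^^ snd p) (ee (fst p)))) \<in> W K' \<Longrightarrow> \<forall>p\<in>F. a p = 0"
    and F: "finite F" "F \<subseteq> {..<rr} \<times> UNIV" "\<forall>p\<in>F. deg p = K"
    and S: "(\<Sum>p\<in>F. scale (a p) ((f ^^ snd p) (ee (fst p)))) \<in> W K"
  shows "\<forall>p\<in>F. a p = 0"
proof -
  define tm where "tm p = scale (a p) ((f ^^ snd p) (ee (fst p)))" for p
  define F0 where "F0 = {p\<in>F. snd p = 0}"
  define F1 where "F1 = {p\<in>F. snd p \<noteq> 0}"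
  have fin0: "finite F0" "finite F1" using F(1) by (auto simp: F0_def F1_def)
  have FU: "F = F0 \<union> F1" "F0 \<inter> F1 = {}" by (auto simp: F0_def F1_def)
  have sumF: "sum tm F = sum tm F0 + sum tm F1" unfolding FU(1) by (rule sum.union_disjoint[OF fin0 FU(2)])
  have SW: "sum tm F \<in> W K" using S unfolding tm_def .
  have rF: "fst p < rr" if "p \<in> F" for p using F(2) that by auto
  define u where "u = (\<Sum>p\<in>F1. scale (g (a p)) ((f ^^ (snd p - 1)) (ee (fst p))))"
  have fu: "f u = sum tm F1"
  proof -
    have "f u = (\<Sum>p\<in>F1. f (scale (g (a p)) ((f ^^ (snd p - 1)) (ee (fst p)))))" unfolding u_def by (rule fadd.sum)
    also have "\<dots> = sum tm F1"
    proof (rule sum.cong[OF refl])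
      fix p assume "p \<in> F1"
      then have "snd p \<noteq> 0" by (simp add: F1_def)
      then have "(f ^^ snd p) (ee (fst p)) = f ((f ^^ (snd p - 1)) (ee (fst p)))"
        by (cases "snd p") simp_all
      then show "f (scale (g (a p)) ((f ^^ (snd p - 1)) (ee (fst p)))) = tm p"
        unfolding tm_def using gf[of "a p" "(f ^^ (snd p - 1)) (ee (fst p))"] by simp
    qed
    finally show ?thesis .
  qed
  have uW: "u \<in> W K" unfolding u_def
  proof (rule subspace_sum[OF W_sub])
    fix p assume p: "p \<in> F1"
    then have p1: "p \<in> F" "snd p \<noteq> 0" by (auto simp: F1_def)
    have "Suc (lev (ee (fst p))) + (snd p - 1) = K" using F(3) p1 unfolding deg_def by auto
    then have "(f ^^ (snd p - 1)) (ee (fst p)) \<in> W K" using term_W[OF rF[OF p1(1)], of "snd p - 1"] by simp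
    then show "scale (g (a p)) ((f ^^ (snd p - 1)) (ee (fst p))) \<in> W K" by (rule subspace_scale[OF W_sub])
  qed
  have s0: "sum tm F0 \<in> span (W K \<union> f ` W K)"
  proof -
    have "sum tm F0 = sum tm F - f u" using sumF fu by simp
    moreover have "sum tm F \<in> span (W K \<union> f ` W K)" using SW span_superset[of "W K \<union> f ` W K"] by blast
    moreover have "f u \<in> span (W K \<union> f ` W K)" using uW span_superset[of "W K \<union> f ` W K"] by blast
    ultimately show ?thesis using span_diff by simp
  qed
  have t0: "tm p = scale (a p) (ee (fst p))" "ee (fst p) \<in> E K" if "p \<in> F0" for p
  proof -
    have p: "p \<in> F" "snd p = 0" using that by (auto simp: F0_def)
    show "tm p = scale (a p) (ee (fst p))" unfolding tm_def using p by simp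
    have "lev (ee (fst p)) = K" using F(3) p unfolding deg_def by auto
    then show "ee (fst p) \<in> E K" using ee_E(1)[OF rF[OF p(1)]] by simp
  qed
  have s0E: "sum tm F0 \<in> span (E K)"
  proof (rule span_sum)
    fix p assume "p \<in> F0"
    then show "tm p \<in> span (E K)" using t0 by (simp add: span_scale span_base)
  qed
  have z0: "sum tm F0 = 0" using E_compl[OF s0E s0] .
  have a0: "a p = 0" if pF0: "p \<in> F0" for p
  proof -
    define \<phi> where "\<phi> q = ee (fst q)" for q :: "nat \<times> nat"
    have inj: "inj_on \<phi> F0"
    proof (rule inj_onI)
      fix x y assume xy: "x \<in> F0" "y \<in> F0" "\<phi> x = \<phi> y"
      have "fst x < rr" "fst y < rr" using xy(1,2) rF by (auto simp: F0_def)
      then have "fst x = fst y" using inj_onD[OF ee_inj] xy(3) unfolding \<phi>_def by auto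
      moreover have "snd x = snd y" using xy(1,2) by (simp add: F0_def)
      ultimately show "x = y" by (simp add: prod_eq_iff)
    qed
    have "(\<Sum>v\<in>\<phi> ` F0. scale (a (inv_into F0 \<phi> v)) v) = (\<Sum>q\<in>F0. scale (a (inv_into F0 \<phi> (\<phi> q))) (\<phi> q))"
      by (rule sum.reindex[OF inj, unfolded comp_def])
    also have "\<dots> = sum tm F0"
    proof (rule sum.cong[OF refl])
      fix q assume q: "q \<in> F0"
      show "scale (a (inv_into F0 \<phi> (\<phi> q))) (\<phi> q) = tm q"
        using inv_into_f_f[OF inj q] t0(1)[OF q] unfolding \<phi>_def by simp
    qed
    finally have z: "(\<Sum>v\<in>\<phi> ` F0. scale (a (inv_into F0 \<phi> v)) v) = 0" using z0 by simp
    have sub: "\<phi> ` F0 \<subseteq> E K" using t0(2) unfolding \<phi>_def by blast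
    have "a (inv_into F0 \<phi> (\<phi> p)) = 0"
      by (rule independentD[OF E_ind finite_imageI[OF fin0(1)] sub z]) (use pF0 in blast)
    then show ?thesis using inv_into_f_f[OF inj pF0] by simp
  qed
  have a1: "a p = 0" if pF1: "p \<in> F1" for p
  proof -
    have p1: "p \<in> F" "snd p \<noteq> 0" using pF1 by (auto simp: F1_def)
    have "K \<noteq> 0" using F(3) p1 unfolding deg_def by auto
    then obtain K' where K': "K = Suc K'" by (cases K) auto
    have "f u = sum tm F" using sumF fu z0 by simp
    then have "f u \<in> W (Suc K')" using SW K' by simp
    then have uW': "u \<in> W K'" by (rule W_back)
    define sh where "sh q = (fst q, snd q - 1)" for q :: "nat \<times> nat"
    define a' where "a' q = g (a (fst q, Suc (snd q)))" for q :: "nat \<times> nat"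
    have inj: "inj_on sh F1"
    proof (rule inj_onI)
      fix x y assume xy: "x \<in> F1" "y \<in> F1" "sh x = sh y"
      have "snd x \<noteq> 0" "snd y \<noteq> 0" using xy(1,2) by (auto simp: F1_def)
      then show "x = y" using xy(3) unfolding sh_def by (simp add: prod_eq_iff) arith
    qed
    have "(\<Sum>q\<in>sh ` F1. scale (a' q) ((f ^^ snd q) (ee (fst q))))
        = (\<Sum>q\<in>F1. scale (a' (sh q)) ((f ^^ snd (sh q)) (ee (fst (sh q)))))"
      by (rule sum.reindex[OF inj, unfolded comp_def])
    also have "\<dots> = u" unfolding u_def
    proof (rule sum.cong[OF refl])
      fix q assume "q \<in> F1"
      then have "snd q \<noteq> 0" by (simp add: F1_def)
      then have "(fst q, Suc (snd q - 1)) = q" by (simp add: prod_eq_iff)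
      then show "scale (a' (sh q)) ((f ^^ snd (sh q)) (ee (fst (sh q))))
          = scale (g (a q)) ((f ^^ (snd q - 1)) (ee (fst q)))" unfolding a'_def sh_def by simp
    qed
    finally have S': "(\<Sum>q\<in>sh ` F1. scale (a' q) ((f ^^ snd q) (ee (fst q)))) \<in> W K'" using uW' by simp
    have fin': "finite (sh ` F1)" using fin0(2) by simp
    have sub': "sh ` F1 \<subseteq> {..<rr} \<times> UNIV" using F(2) unfolding F1_def sh_def by auto
    have deg': "\<forall>q\<in>sh ` F1. deg q = K'"
    proof
      fix q assume "q \<in> sh ` F1"
      then obtain x where x: "x \<in> F1" "q = sh x" by blast
      have "x \<in> F" "snd x \<noteq> 0" using x(1) by (auto simp: F1_def)
      then show "deg q = K'" using F(3) K' x(2) unfolding deg_def sh_def by auto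
    qed
    have "\<forall>q\<in>sh ` F1. a' q = 0" by (rule IH[OF K' fin' sub' deg' S'])
    then have "a' (sh p) = 0" using pF1 by blast
    moreover have "(fst p, Suc (snd p - 1)) = p" using p1(2) by (simp add: prod_eq_iff)
    ultimately have "g (a p) = 0" unfolding a'_def sh_def by simp
    then show ?thesis by (rule g0)
  qed
  show ?thesis using a0 a1 FU(1) by blast
qed

lemma Top:
  "finite F \<Longrightarrow> F \<subseteq> {..<rr} \<times> UNIV \<Longrightarrow> (\<forall>p\<in>F. deg p = K) \<Longrightarrow>
   (\<Sum>p\<in>F. scale (a p) ((f ^^ snd p) (ee (fst p)))) \<in> W K \<Longrightarrow> \<forall>p\<in>F. a p = 0"
proof (induction K arbitrary: F a)
  case 0
  show ?case by (rule Top_step[OF _ "0.prems"]) simp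
next
  case (Suc K)
  show ?case
  proof (rule Top_step[OF _ Suc.prems])
    fix K' F a assume "Suc K = Suc K'" "finite F" "F \<subseteq> {..<rr} \<times> UNIV" "\<forall>p\<in>F. deg p = K'"
      "(\<Sum>p\<in>F. scale (a p) ((f ^^ snd p) (ee (fst p)))) \<in> W K'"
    then show "\<forall>p\<in>F. a p = 0" using Suc.IH[of F a] by simp
  qed
qed

lemma Ind:
  "finite F \<Longrightarrow> F \<subseteq> {..<rr} \<times> UNIV \<Longrightarrow> (\<forall>p\<in>F. deg p < K) \<Longrightarrow>
   (\<Sum>p\<in>F. scale (a p) ((f ^^ snd p) (ee (fst p)))) \<in> TT \<Longrightarrow> \<forall>p\<in>F. a p = 0"
proof (induction K arbitrary: F)
  case 0 then show ?case by auto
next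
  case (Suc K)
  define tm where "tm p = scale (a p) ((f ^^ snd p) (ee (fst p)))" for p
  define Ft where "Ft = {p\<in>F. deg p = K}"
  define Fr where "Fr = {p\<in>F. deg p < K}"
  have fin: "finite Ft" "finite Fr" using Suc.prems(1) by (auto simp: Ft_def Fr_def)
  have FU: "F = Ft \<union> Fr" "Ft \<inter> Fr = {}" using Suc.prems(3) by (auto simp: Ft_def Fr_def)
  have sumF: "sum tm F = sum tm Ft + sum tm Fr" unfolding FU(1) by (rule sum.union_disjoint[OF fin FU(2)])
  have ST: "sum tm F \<in> TT" using Suc.prems(4) unfolding tm_def .
  have rF: "fst p < rr" if "p \<in> F" for p using Suc.prems(2) that by auto
  have SrW: "sum tm Fr \<in> W K"
  proof (rule subspace_sum[OF W_sub])
    fix p assume p: "p \<in> Fr"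
    then have p1: "p \<in> F" "deg p < K" by (auto simp: Fr_def)
    have "(f ^^ snd p) (ee (fst p)) \<in> W (Suc (lev (ee (fst p))) + snd p)" by (rule term_W[OF rF[OF p1(1)]])
    moreover have "W (Suc (lev (ee (fst p))) + snd p) \<subseteq> W K" using p1(2) unfolding deg_def by (intro W_mono) simp
    ultimately have "(f ^^ snd p) (ee (fst p)) \<in> W K" by blast
    then show "tm p \<in> W K" unfolding tm_def by (rule subspace_scale[OF W_sub])
  qed
  have "TT \<subseteq> W K" using W_0 W_mono[of 0 K] by simp
  then have SFW: "sum tm F \<in> W K" using ST by blast
  have "sum tm Ft = sum tm F - sum tm Fr" using sumF by simp
  then have StW: "sum tm Ft \<in> W K" using subspace_diff[OF W_sub SFW SrW] by simp
  have degt: "\<forall>p\<in>Ft. deg p = K" by (simp add: Ft_def)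
  have subt: "Ft \<subseteq> {..<rr} \<times> UNIV" using Suc.prems(2) by (auto simp: Ft_def)
  have at: "\<forall>p\<in>Ft. a p = 0" by (rule Top[OF fin(1) subt degt]) (use StW in \<open>simp add: tm_def\<close>)
  then have "sum tm Ft = 0" unfolding tm_def by simp
  then have "sum tm Fr \<in> TT" using sumF ST by simp
  then have ar: "\<forall>p\<in>Fr. a p = 0"
    by (intro Suc.IH[OF fin(2)]) (use Suc.prems(2) in \<open>auto simp: Fr_def tm_def\<close>)
  show ?case using at ar FU(1) by blast
qed

lemma span_all: "span ({(f ^^ n) (ee i) | i n. i < rr} \<union> TT) = UNIV"
proof -
  define Fe where "Fe = {(f ^^ n) (ee i) | i n. i < rr}"
  define Z where "Z = span (Fe \<union> TT)"
  have fZ: "f ` Z \<subseteq> Z"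
  proof -
    have "f ` (Fe \<union> TT) \<subseteq> Fe \<union> TT"
    proof
      fix y assume "y \<in> f ` (Fe \<union> TT)"
      then obtain x where x: "x \<in> Fe \<union> TT" "y = f x" by blast
      show "y \<in> Fe \<union> TT"
      proof (cases "x \<in> Fe")
        case True
        then obtain i n where "i < rr" "x = (f ^^ n) (ee i)" unfolding Fe_def by blast
        then have "y = (f ^^ Suc n) (ee i)" using x(2) by simp
        then show ?thesis unfolding Fe_def using \<open>i < rr\<close> by blast
      next
        case False
        then have "x \<in> TT" using x(1) by blast
        then show ?thesis using T_stable x(2) by blast
      qed
    qed
    then have "span (f ` (Fe \<union> TT)) \<subseteq> Z" unfolding Z_def by (rule span_mono)
    then show ?thesis unfolding Z_def using f_span_sub by blast
  qed
  have WZ: "W n \<subseteq> Z" for n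
  proof (induction n)
    case 0
    show ?case unfolding W_0 Z_def using span_superset[of "Fe \<union> TT"] by blast
  next
    case (Suc n)
    have EZ: "E n \<subseteq> Z"
    proof (cases "n < L")
      case True
      show ?thesis
      proof
        fix x assume "x \<in> E n"
        then have "x \<in> UU" unfolding UU_def using True by blast
        then obtain i where i: "i < rr" "x = ee i" using ee_img by blast
        then have "x = (f ^^ 0) (ee i)" by simp
        then have "x \<in> Fe" unfolding Fe_def using i(1) by blast
        then show "x \<in> Z" unfolding Z_def using span_superset[of "Fe \<union> TT"] by blast
      qed
    next
      case False
      then show ?thesis using E_empty by simp
    qed
    have "(W n \<union> f ` W n) \<union> E n \<subseteq> Z" using Suc.IH fZ EZ by blast
    then have "span ((W n \<union> f ` W n) \<union> E n) \<subseteq> Z" unfolding Z_def by (intro span_minimal) simp_all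
    then show ?case using E_span by blast
  qed
  have "UNIV \<subseteq> Z" using WZ W_all by blast
  then show ?thesis unfolding Z_def Fe_def by blast
qed

theorem main: "fin_dim_sub scale TT \<and> free_fin_rank_mod scale f TT"
proof
  show "fin_dim_sub scale TT" by (rule T_fd)
  show "free_fin_rank_mod scale f TT" unfolding free_fin_rank_mod_def
  proof (intro exI conjI allI impI)
    show "span ({(f ^^ n) (ee i) | i n. i < rr} \<union> TT) = UNIV" by (rule span_all)
  next
    fix F and c :: "nat \<times> nat \<Rightarrow> 'k"
    assume H: "finite F \<and> F \<subseteq> {..<rr} \<times> UNIV \<and> (\<Sum>(i, n)\<in>F. scale (c (i, n)) ((f ^^ n) (ee i))) \<in> TT"
    have S: "(\<Sum>p\<in>F. scale (c p) ((f ^^ snd p) (ee (fst p)))) \<in> TT"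
      using H by (simp add: case_prod_beta)
    have "\<forall>p\<in>F. deg p < Suc (Max (deg ` F))"
      using H Max_ge[OF finite_imageI[of F deg]] by (simp add: le_imp_less_Suc)
    then show "\<forall>x\<in>F. c x = 0" using Ind[of F "Suc (Max (deg ` F))" c] H S by blast
  qed
qed

end




lemma (in slin) comm_stable:
  assumes hs: "slin scale h" and comm: "\<And>m. f (h m) = h (f m)"
  shows "h ` fd_part scale f \<subseteq> fd_part scale f"
proof -
  interpret H: slin scale h by (rule hs)
  have "h ` \<Union>Fam \<subseteq> \<Union>Fam"
  proof
    fix y assume "y \<in> h ` \<Union>Fam"
    then obtain N x where N: "N \<in> Fam" "x \<in> N" "y = h x" by blast
    obtain B where B: "finite B" "span B = N" using N(1) unfolding Fam_def fin_dim_sub_def by blast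
    have hN: "h ` N = span (h ` B)" using H.f_span[of B] B(2) by simp
    have "f ` (h ` N) = h ` (f ` N)" by (auto simp: image_comp comm image_iff)
    also have "\<dots> \<subseteq> h ` N" using N(1) unfolding Fam_def by blast
    finally have st: "f ` (h ` N) \<subseteq> h ` N" .
    have "h ` N \<in> Fam" unfolding Fam_def fin_dim_sub_def
      using hN st B(1) by (auto intro!: exI[of _ "h ` B"])
    then show "y \<in> \<Union>Fam" using N by blast
  qed
  then have "span (h ` \<Union>Fam) \<subseteq> span (\<Union>Fam)" by (rule span_mono)
  then show ?thesis unfolding T_eq using H.f_span[of "\<Union>Fam"] by simp
qed

lemma fd_sub:
  assumes "slin_fg scale f S" "slin scale h" "\<And>m. f (h m) = h (f m)"
  shows "fd_part scale f \<subseteq> fd_part scale h"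
proof -
  interpret F: slin_fg scale f S by (rule assms(1))
  interpret H: slin scale h by (rule assms(2))
  have st: "h ` fd_part scale f \<subseteq> fd_part scale f" by (rule F.comm_stable[OF assms(2,3)])
  have sub: "F.subspace (fd_part scale f)" by (rule F.T_subspace)
  have fd: "fin_dim_sub scale (fd_part scale f)" by (rule F.T_fd)
  have "fd_part scale f \<in> H.Fam" unfolding H.Fam_def using st sub fd by blast
  then show ?thesis by (rule H.Fam_sub_T)
qed

theorem proposition4:
  fixes q :: nat
    and scale :: "'k::field \<Rightarrow> 'm::ab_group_add \<Rightarrow> 'm"
    and sig :: "'m \<Rightarrow> 'm"
    and t :: "'m \<Rightarrow> 'm"
  assumes "is_alg_closure_FqT q TYPE('k)"
    and "kt_sigma_module q scale sig t"
    and "fin_gen_over scale sig"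
    and "fin_gen_over scale t"
  shows "fd_part scale sig = fd_part scale t
    \<and> fin_dim_sub scale (fd_part scale sig)
    \<and> free_fin_rank_mod scale sig (fd_part scale sig)
    \<and> free_fin_rank_mod scale t (fd_part scale sig)"
proof -
  obtain p e where pe: "prime p" "e > 0" "q = p ^ e"
    using assms(1) unfolding is_alg_closure_FqT_def by blast
  have q0: "q > 0" using pe prime_gt_0_nat by simp
  have ac: "alg_closed_field TYPE('k)" using assms(1) unfolding is_alg_closure_FqT_def by blast
  have root: "\<exists>x::'k. x ^ q = c" for c :: 'k
  proof -
    define P where "P = monom (1::'k) q + [:- c:]"
    have "degree P = q" unfolding P_def
      by (subst degree_add_eq_left) (use q0 in \<open>simp_all add: degree_monom_eq\<close>)
    then obtain x where "poly P x = 0" using ac q0 unfolding alg_closed_field_def by blast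
    then have "x ^ q = c" unfolding P_def by (simp add: poly_monom)
    then show ?thesis by blast
  qed
  have kt: "vector_space scale" "\<And>a b. sig (a + b) = sig a + sig b"
    "\<And>x m. sig (scale (x ^ q) m) = scale x (sig m)" "\<And>a b. t (a + b) = t a + t b"
    "\<And>x m. t (scale x m) = scale x (t m)" "\<And>m. sig (t m) = t (sig m)"
    using assms(2) unfolding kt_sigma_module_def by blast+
  have sl_sig: "slin scale sig"
  proof (rule slin.intro[OF kt(1)], rule slin_axioms.intro)
    show "sig (a + b) = sig a + sig b" for a b by (rule kt(2))
    show "\<exists>x. \<forall>v. sig (scale c v) = scale x (sig v)" for c
    proof -
      obtain x where "x ^ q = c" using root by blast
      then show ?thesis using kt(3)[of x] by blast
    qed
    show "\<exists>y. (y = 0 \<longrightarrow> x = 0) \<and> (\<forall>v. scale x (sig v) = sig (scale y v))" for x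
      using kt(3)[of x] q0 by (intro exI[of _ "x ^ q"]) simp
  qed
  have sl_t: "slin scale t"
  proof (rule slin.intro[OF kt(1)], rule slin_axioms.intro)
    show "t (a + b) = t a + t b" for a b by (rule kt(4))
    show "\<exists>x. \<forall>v. t (scale c v) = scale x (t v)" for c using kt(5) by blast
    show "\<exists>y. (y = 0 \<longrightarrow> x = 0) \<and> (\<forall>v. scale x (t v) = t (scale y v))" for x
      using kt(5) by (intro exI[of _ x]) simp
  qed
  obtain S1 where S1: "finite S1" "module.span scale {(sig ^^ n) s | s n. s \<in> S1} = UNIV"
    using assms(3) unfolding fin_gen_over_def by blast
  obtain S2 where S2: "finite S2" "module.span scale {(t ^^ n) s | s n. s \<in> S2} = UNIV"
    using assms(4) unfolding fin_gen_over_def by blast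
  have fg1: "slin_fg scale sig S1" by (rule slin_fg.intro[OF sl_sig slin_fg_axioms.intro[OF S1]])
  have fg2: "slin_fg scale t S2" by (rule slin_fg.intro[OF sl_t slin_fg_axioms.intro[OF S2]])
  have eq: "fd_part scale sig = fd_part scale t"
  proof
    show "fd_part scale sig \<subseteq> fd_part scale t" by (rule fd_sub[OF fg1 sl_t kt(6)])
    show "fd_part scale t \<subseteq> fd_part scale sig" by (rule fd_sub[OF fg2 sl_sig kt(6)[symmetric]])
  qed
  have m1: "fin_dim_sub scale (fd_part scale sig) \<and> free_fin_rank_mod scale sig (fd_part scale sig)"
    by (rule slin_fg.main[OF fg1])
  have m2: "free_fin_rank_mod scale t (fd_part scale t)"
    using slin_fg.main[OF fg2] by blast
  show ?thesis using eq m1 m2 by simp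
qed



end
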